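(* A category $\mathcal{C}$ is complete w.r.t. systems of equations if at least one of the following holds: (1) for every object $A$, the class of equations with domain $A$ is small up to equivalence (there is a set of equations with domain $A$ such that every equation with domain $A$ is equivalent to one in the set); (2) $\mathcal{C}$ is complete w.r.t. varieties and has equalizers; (3) $\mathcal{C}$ has coproducts and cokernel pairs; (4) $\mathcal{C}$ has cokernel pairs and colimits of all diagrams of shape $P$, where $P$ is any poset having exactly two minimal elements and in which every other element is maximal and greater than both minimal elements.
   Context: An equation is a pair of parallel morphisms; a system of equations is a non-empty set of equations with a common domain $A$; a solution is a morphism $a$ into $A$ with $fa=ga$ for every equation $f\approx g$; $E\Rightarrow K$ means every solution of $E$ is a solution of $K$; two systems (or equations) are equivalent if they have the same solutions. A general solution of $E$ is a solution $v$ through which every solution factors uniquely; a variety is a general solution of some system. For morphisms with common codomain, $f\le v$ means $f=vh$ for some $h$. For a non-empty set $S$ of morphisms with codomain $A$: a system $E$ on $A$ is generated by $S$ if every element of $S$ is a solution of $E$ and every system $K$ on $A$ having all elements of $S$ as solutions satisfies $E\Rightarrow K$; a variety $v$ is generated by $S$ if $f\le v$ for all $f\in S$ and $v\le w$ for every variety $w$ with $f\le w$ for all $f\in S$. $\mathcal{C}$ is complete w.r.t. varieties (resp. systems of equations) if every non-empty set of morphisms with a common codomain generates some variety (resp. some system of equations). *)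

theory Defs
  imports Main
begin

text \<open>A category with object type 'o and morphism type 'm (every element of the types
  is an object / morphism).  cmp C f g is the composite "f after g", meaningful when
  cdom C f = ccod C g.\<close>

record ('o, 'm) cat =
  cdom :: "'m \<Rightarrow> 'o"
  ccod :: "'m \<Rightarrow> 'o"
  cid  :: "'o \<Rightarrow> 'm"
  cmp  :: "'m \<Rightarrow> 'm \<Rightarrow> 'm"

definition category :: "('o, 'm) cat \<Rightarrow> bool" where
  "category C \<longleftrightarrow>
     (\<forall>A. cdom C (cid C A) = A \<and> ccod C (cid C A) = A) \<and>
     (\<forall>f g. cdom C f = ccod C g \<longrightarrow>
        cdom C (cmp C f g) = cdom C g \<and> ccod C (cmp C f g) = ccod C f) \<and>
     (\<forall>f. cmp C f (cid C (cdom C f)) = f \<and> cmp C (cid C (ccod C f)) f = f) \<and>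
     (\<forall>f g h. cdom C f = ccod C g \<and> cdom C g = ccod C h \<longrightarrow>
        cmp C (cmp C f g) h = cmp C f (cmp C g h))"

text \<open>Size: a collection is a "set" (small) if it injects into the universe type 'u.\<close>

definition small :: "'u itself \<Rightarrow> 'a set \<Rightarrow> bool" where
  "small U X \<longleftrightarrow> (\<exists>h :: 'a \<Rightarrow> 'u. inj_on h X)"

definition parallel :: "('o, 'm) cat \<Rightarrow> 'm \<Rightarrow> 'm \<Rightarrow> bool" where
  "parallel C f g \<longleftrightarrow> cdom C f = cdom C g \<and> ccod C f = ccod C g"

definition is_system :: "('o, 'm) cat \<Rightarrow> 'u itself \<Rightarrow> ('m \<times> 'm) set \<Rightarrow> 'o \<Rightarrow> bool" where
  "is_system C U E A \<longleftrightarrow> E \<noteq> {} \<and> small U E \<and>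
     (\<forall>(f, g) \<in> E. parallel C f g \<and> cdom C f = A)"

definition solves :: "('o, 'm) cat \<Rightarrow> 'm \<Rightarrow> 'm \<times> 'm \<Rightarrow> bool" where
  "solves C a e \<longleftrightarrow> ccod C a = cdom C (fst e) \<and> cmp C (fst e) a = cmp C (snd e) a"

definition solution :: "('o, 'm) cat \<Rightarrow> 'm \<Rightarrow> ('m \<times> 'm) set \<Rightarrow> bool" where
  "solution C a E \<longleftrightarrow> (\<forall>e \<in> E. solves C a e)"

definition sys_implies :: "('o, 'm) cat \<Rightarrow> ('m \<times> 'm) set \<Rightarrow> ('m \<times> 'm) set \<Rightarrow> bool" where
  "sys_implies C E K \<longleftrightarrow> (\<forall>a. solution C a E \<longrightarrow> solution C a K)"

definition eq_equiv :: "('o, 'm) cat \<Rightarrow> 'm \<times> 'm \<Rightarrow> 'm \<times> 'm \<Rightarrow> bool" where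
  "eq_equiv C e e' \<longleftrightarrow> (\<forall>a. solves C a e \<longleftrightarrow> solves C a e')"

definition general_solution :: "('o, 'm) cat \<Rightarrow> 'm \<Rightarrow> ('m \<times> 'm) set \<Rightarrow> bool" where
  "general_solution C v E \<longleftrightarrow> solution C v E \<and>
     (\<forall>a. solution C a E \<longrightarrow> (\<exists>!h. ccod C h = cdom C v \<and> a = cmp C v h))"

definition variety :: "('o, 'm) cat \<Rightarrow> 'u itself \<Rightarrow> 'm \<Rightarrow> bool" where
  "variety C U v \<longleftrightarrow> (\<exists>E A. is_system C U E A \<and> general_solution C v E)"

definition factors :: "('o, 'm) cat \<Rightarrow> 'm \<Rightarrow> 'm \<Rightarrow> bool" where
  "factors C f v \<longleftrightarrow> ccod C f = ccod C v \<and> (\<exists>h. ccod C h = cdom C v \<and> f = cmp C v h)"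

definition generates_system ::
    "('o, 'm) cat \<Rightarrow> 'u itself \<Rightarrow> 'm set \<Rightarrow> ('m \<times> 'm) set \<Rightarrow> 'o \<Rightarrow> bool" where
  "generates_system C U S E A \<longleftrightarrow> is_system C U E A \<and> (\<forall>f \<in> S. solution C f E) \<and>
     (\<forall>K. is_system C U K A \<and> (\<forall>f \<in> S. solution C f K) \<longrightarrow> sys_implies C E K)"

definition generates_variety :: "('o, 'm) cat \<Rightarrow> 'u itself \<Rightarrow> 'm set \<Rightarrow> 'm \<Rightarrow> bool" where
  "generates_variety C U S v \<longleftrightarrow> variety C U v \<and> (\<forall>f \<in> S. factors C f v) \<and>
     (\<forall>w. variety C U w \<and> (\<forall>f \<in> S. factors C f w) \<longrightarrow> factors C v w)"

definition complete_wrt_systems :: "('o, 'm) cat \<Rightarrow> 'u itself \<Rightarrow> bool" where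
  "complete_wrt_systems C U \<longleftrightarrow>
     (\<forall>S A. S \<noteq> {} \<and> small U S \<and> (\<forall>f \<in> S. ccod C f = A) \<longrightarrow>
        (\<exists>E. generates_system C U S E A))"

definition complete_wrt_varieties :: "('o, 'm) cat \<Rightarrow> 'u itself \<Rightarrow> bool" where
  "complete_wrt_varieties C U \<longleftrightarrow>
     (\<forall>S A. S \<noteq> {} \<and> small U S \<and> (\<forall>f \<in> S. ccod C f = A) \<longrightarrow>
        (\<exists>v. generates_variety C U S v))"

definition equations_small :: "('o, 'm) cat \<Rightarrow> 'u itself \<Rightarrow> bool" where
  "equations_small C U \<longleftrightarrow>
     (\<forall>A. \<exists>R. small U R \<and> (\<forall>(f, g) \<in> R. parallel C f g \<and> cdom C f = A) \<and>
        (\<forall>f g. parallel C f g \<and> cdom C f = A \<longrightarrow> (\<exists>e \<in> R. eq_equiv C (f, g) e)))"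

definition has_equalizers :: "('o, 'm) cat \<Rightarrow> bool" where
  "has_equalizers C \<longleftrightarrow>
     (\<forall>f g. parallel C f g \<longrightarrow>
        (\<exists>e. ccod C e = cdom C f \<and> cmp C f e = cmp C g e \<and>
           (\<forall>x. ccod C x = cdom C f \<and> cmp C f x = cmp C g x \<longrightarrow>
              (\<exists>!h. ccod C h = cdom C e \<and> x = cmp C e h))))"

definition has_cokernel_pairs :: "('o, 'm) cat \<Rightarrow> bool" where
  "has_cokernel_pairs C \<longleftrightarrow>
     (\<forall>f. \<exists>p q. parallel C p q \<and> cdom C p = ccod C f \<and> cmp C p f = cmp C q f \<and>
        (\<forall>g h. parallel C g h \<and> cdom C g = ccod C f \<and> cmp C g f = cmp C h f \<longrightarrow>
           (\<exists>!t. cdom C t = ccod C p \<and> cmp C t p = g \<and> cmp C t q = h)))"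

definition has_coproducts :: "('o, 'm) cat \<Rightarrow> 'u itself \<Rightarrow> bool" where
  "has_coproducts C (U :: 'u itself) \<longleftrightarrow>
     (\<forall>(I :: 'u set) (X :: 'u \<Rightarrow> 'o). \<exists>Q \<iota>.
        (\<forall>i \<in> I. cdom C (\<iota> i) = X i \<and> ccod C (\<iota> i) = Q) \<and>
        (\<forall>B g. (\<forall>i \<in> I. cdom C (g i) = X i \<and> ccod C (g i) = B) \<longrightarrow>
           (\<exists>!t. cdom C t = Q \<and> ccod C t = B \<and> (\<forall>i \<in> I. cmp C t (\<iota> i) = g i))))"

definition is_poset :: "'u set \<Rightarrow> ('u \<Rightarrow> 'u \<Rightarrow> bool) \<Rightarrow> bool" where
  "is_poset P le \<longleftrightarrow> (\<forall>x \<in> P. le x x) \<and>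
     (\<forall>x \<in> P. \<forall>y \<in> P. le x y \<and> le y x \<longrightarrow> x = y) \<and>
     (\<forall>x \<in> P. \<forall>y \<in> P. \<forall>z \<in> P. le x y \<and> le y z \<longrightarrow> le x z)"

definition minimal_in :: "'u set \<Rightarrow> ('u \<Rightarrow> 'u \<Rightarrow> bool) \<Rightarrow> 'u \<Rightarrow> bool" where
  "minimal_in P le x \<longleftrightarrow> x \<in> P \<and> (\<forall>y \<in> P. le y x \<longrightarrow> y = x)"

definition maximal_in :: "'u set \<Rightarrow> ('u \<Rightarrow> 'u \<Rightarrow> bool) \<Rightarrow> 'u \<Rightarrow> bool" where
  "maximal_in P le x \<longleftrightarrow> x \<in> P \<and> (\<forall>y \<in> P. le x y \<longrightarrow> y = x)"

definition special_shape :: "'u set \<Rightarrow> ('u \<Rightarrow> 'u \<Rightarrow> bool) \<Rightarrow> bool" where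
  "special_shape P le \<longleftrightarrow> is_poset P le \<and>
     (\<exists>m1 m2. m1 \<noteq> m2 \<and> {x. minimal_in P le x} = {m1, m2} \<and>
        (\<forall>x \<in> P - {m1, m2}. maximal_in P le x \<and> le m1 x \<and> le m2 x))"

definition is_diagram ::
    "('o, 'm) cat \<Rightarrow> 'u set \<Rightarrow> ('u \<Rightarrow> 'u \<Rightarrow> bool) \<Rightarrow> ('u \<Rightarrow> 'o) \<Rightarrow> ('u \<Rightarrow> 'u \<Rightarrow> 'm) \<Rightarrow> bool" where
  "is_diagram C P le D Dm \<longleftrightarrow>
     (\<forall>x \<in> P. \<forall>y \<in> P. le x y \<longrightarrow> cdom C (Dm x y) = D x \<and> ccod C (Dm x y) = D y) \<and>
     (\<forall>x \<in> P. Dm x x = cid C (D x)) \<and>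
     (\<forall>x \<in> P. \<forall>y \<in> P. \<forall>z \<in> P. le x y \<and> le y z \<longrightarrow> cmp C (Dm y z) (Dm x y) = Dm x z)"

definition is_cocone ::
    "('o, 'm) cat \<Rightarrow> 'u set \<Rightarrow> ('u \<Rightarrow> 'u \<Rightarrow> bool) \<Rightarrow> ('u \<Rightarrow> 'o) \<Rightarrow> ('u \<Rightarrow> 'u \<Rightarrow> 'm)
       \<Rightarrow> 'o \<Rightarrow> ('u \<Rightarrow> 'm) \<Rightarrow> bool" where
  "is_cocone C P le D Dm B \<mu> \<longleftrightarrow>
     (\<forall>x \<in> P. cdom C (\<mu> x) = D x \<and> ccod C (\<mu> x) = B) \<and>
     (\<forall>x \<in> P. \<forall>y \<in> P. le x y \<longrightarrow> cmp C (\<mu> y) (Dm x y) = \<mu> x)"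

definition has_colimit ::
    "('o, 'm) cat \<Rightarrow> 'u set \<Rightarrow> ('u \<Rightarrow> 'u \<Rightarrow> bool) \<Rightarrow> ('u \<Rightarrow> 'o) \<Rightarrow> ('u \<Rightarrow> 'u \<Rightarrow> 'm) \<Rightarrow> bool" where
  "has_colimit C P le D Dm \<longleftrightarrow>
     (\<exists>L lg. is_cocone C P le D Dm L lg \<and>
        (\<forall>B \<mu>. is_cocone C P le D Dm B \<mu> \<longrightarrow>
           (\<exists>!t. cdom C t = L \<and> ccod C t = B \<and> (\<forall>x \<in> P. cmp C t (lg x) = \<mu> x))))"

definition has_special_colimits :: "('o, 'm) cat \<Rightarrow> 'u itself \<Rightarrow> bool" where
  "has_special_colimits C (U :: 'u itself) \<longleftrightarrow>
     (\<forall>(P :: 'u set) le D Dm. special_shape P le \<and> is_diagram C P le D Dm \<longrightarrow>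
        has_colimit C P le D Dm)"

end

theory Submission
  imports Defs
begin

lemma two_fresh:
  assumes "infinite (UNIV :: 'u set)"
  shows "\<exists>(k::'u\<Rightarrow>'u) m1 m2. inj k \<and> m1 \<noteq> m2 \<and> m1 \<notin> range k \<and> m2 \<notin> range k"
proof -
  fix a :: 'u
  obtain h where h: "bij_betw h (UNIV::'u set) (UNIV - {a})"
    using infinite_imp_bij_betw[of "UNIV::'u set" a] assms by auto
  have ih: "inj h" and rh: "range h = UNIV - {a}" using h unfolding bij_betw_def by auto
  have i2: "inj (h \<circ> h)" using ih by (simp add: inj_compose)
  have n1: "h a \<noteq> a" using rh by auto
  have n2: "a \<notin> range (h \<circ> h)" using rh by auto
  have n3: "h a \<notin> range (h \<circ> h)"
  proof
    assume "h a \<in> range (h \<circ> h)" then obtain x where "h a = h (h x)" by auto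
    hence "a = h x" using ih by (simp add: inj_eq)
    thus False using rh by auto
  qed
  show ?thesis using i2 n1 n2 n3 by (intro exI[of _ "h \<circ> h"] exI[of _ a] exI[of _ "h a"]) auto
qed

context fixes C :: "('o,'m) cat" assumes cat: "category C" begin
lemma cdom_cmp: "cdom C f = ccod C g \<Longrightarrow> cdom C (cmp C f g) = cdom C g"
  using cat unfolding category_def by blast
lemma ccod_cmp: "cdom C f = ccod C g \<Longrightarrow> ccod C (cmp C f g) = ccod C f"
  using cat unfolding category_def by blast
lemma assoc: "cdom C f = ccod C g \<Longrightarrow> cdom C g = ccod C h \<Longrightarrow> cmp C (cmp C f g) h = cmp C f (cmp C g h)"
  using cat unfolding category_def by blast
lemma id_r: "cdom C f = X \<Longrightarrow> cmp C f (cid C X) = f"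
  using cat unfolding category_def by blast
lemma id_l: "ccod C f = X \<Longrightarrow> cmp C (cid C X) f = f"
  using cat unfolding category_def by blast
lemma cdom_id[simp]: "cdom C (cid C X) = X" using cat unfolding category_def by blast
lemma ccod_id[simp]: "ccod C (cid C X) = X" using cat unfolding category_def by blast

lemma solves_cmp:
  assumes "solves C v e" "parallel C (fst e) (snd e)" "ccod C h = cdom C v"
  shows "solves C (cmp C v h) e"
proof -
  have "cmp C (fst e) (cmp C v h) = cmp C (cmp C (fst e) v) h"
    using assms assoc[of "fst e" v h] by (simp add: solves_def)
  also have "\<dots> = cmp C (cmp C (snd e) v) h" using assms by (simp add: solves_def)
  also have "\<dots> = cmp C (snd e) (cmp C v h)"
    using assms by (simp add: assoc solves_def parallel_def)
  finally show ?thesis using assms by (simp add: solves_def ccod_cmp)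
qed

lemma gen_pair:
  assumes SA: "\<forall>f\<in>S. ccod C f = A"
    and par: "parallel C P Q" and dP: "cdom C P = A"
    and sol: "\<forall>f\<in>S. cmp C P f = cmp C Q f"
    and univ: "\<And>g h. parallel C g h \<Longrightarrow> cdom C g = A \<Longrightarrow> \<forall>f\<in>S. cmp C g f = cmp C h f \<Longrightarrow>
        \<exists>t. cdom C t = ccod C P \<and> cmp C t P = g \<and> cmp C t Q = h"
  shows "generates_system C U S {(P,Q)} A"
  unfolding generates_system_def
proof (intro conjI allI impI)
  show "is_system C U {(P, Q)} A" using par dP
    by (auto simp: is_system_def small_def)
  show "\<forall>f\<in>S. solution C f {(P, Q)}" using SA sol dP by (auto simp: solution_def solves_def)
next
  fix K assume K: "is_system C U K A \<and> (\<forall>f\<in>S. solution C f K)"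
  show "sys_implies C {(P, Q)} K" unfolding sys_implies_def
  proof (intro allI impI)
    fix a assume a: "solution C a {(P, Q)}"
    hence ca: "ccod C a = A" and pa: "cmp C P a = cmp C Q a" using dP by (auto simp: solution_def solves_def)
    show "solution C a K" unfolding solution_def
    proof
      fix e assume e: "e \<in> K"
      obtain g h where eg: "e = (g,h)" by (cases e)
      have pg: "parallel C g h" "cdom C g = A" using K e eg by (auto simp: is_system_def)
      have "\<forall>f\<in>S. solves C f (g,h)" using K e eg unfolding solution_def by blast
      hence "\<forall>f\<in>S. cmp C g f = cmp C h f" unfolding solves_def by simp
      then obtain t where t: "cdom C t = ccod C P" "cmp C t P = g" "cmp C t Q = h"
        using univ pg by blast
      have "cmp C g a = cmp C t (cmp C P a)" using t dP ca assoc[of t P a] by simp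
      also have "\<dots> = cmp C t (cmp C Q a)" using pa by simp
      also have "\<dots> = cmp C h a" using t par dP ca assoc[of t Q a] unfolding parallel_def by simp
      finally show "solves C a e" using eg ca pg by (simp add: solves_def)
    qed
  qed
qed

lemma case1:
  fixes U :: "'u itself"
  assumes ES: "equations_small C U" and S: "\<forall>f\<in>S. ccod C f = A"
  shows "\<exists>E. generates_system C U S E A"
proof -
  have "\<exists>R. small U R \<and> (\<forall>(f, g) \<in> R. parallel C f g \<and> cdom C f = A) \<and>
        (\<forall>f g. parallel C f g \<and> cdom C f = A \<longrightarrow> (\<exists>e \<in> R. eq_equiv C (f, g) e))"
    using spec[OF ES[unfolded equations_small_def], of A] .
  then obtain R where R: "small U R" "\<forall>(f, g) \<in> R. parallel C f g \<and> cdom C f = A"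
     "\<forall>f g. parallel C f g \<and> cdom C f = A \<longrightarrow> (\<exists>e \<in> R. eq_equiv C (f, g) e)"
    by blast
  define E where "E = {e\<in>R. \<forall>f\<in>S. solves C f e}"
  have "parallel C (cid C A) (cid C A) \<and> cdom C (cid C A) = A" by (simp add: parallel_def)
  then obtain e0 where e0: "e0 \<in> R" "eq_equiv C (cid C A, cid C A) e0"
    using R(3) by blast
  have "solves C f e0" if f: "f \<in> S" for f
  proof -
    have "solves C f (cid C A, cid C A)" using f S by (simp add: solves_def)
    thus ?thesis using e0(2) unfolding eq_equiv_def by blast
  qed
  hence "e0 \<in> E" using e0(1) unfolding E_def by blast
  moreover have "small U E"
  proof -
    obtain hh :: "'m \<times> 'm \<Rightarrow> 'u" where "inj_on hh R" using R(1) unfolding small_def by blast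
    moreover have "E \<subseteq> R" unfolding E_def by blast
    ultimately have "inj_on hh E" by (rule inj_on_subset)
    thus ?thesis unfolding small_def by blast
  qed
  moreover have "\<forall>(f, g) \<in> E. parallel C f g \<and> cdom C f = A" using R(2) unfolding E_def by auto
  ultimately have sys: "is_system C U E A" unfolding is_system_def by (intro conjI; assumption?; blast)
  show ?thesis unfolding generates_system_def
  proof (intro exI conjI allI impI)
    show "is_system C U E A" by (rule sys)
    show "\<forall>f\<in>S. solution C f E" unfolding E_def solution_def by blast
  next
    fix K assume K: "is_system C U K A \<and> (\<forall>f\<in>S. solution C f K)"
    show "sys_implies C E K" unfolding sys_implies_def solution_def
    proof (intro allI impI ballI)
      fix a e assume a: "\<forall>e\<in>E. solves C a e" and e: "e \<in> K"
      obtain g h where eg: "e = (g,h)" by (cases e)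
      have "parallel C g h \<and> cdom C g = A" using K e eg by (auto simp: is_system_def)
      then obtain e' where e': "e' \<in> R" "eq_equiv C (g,h) e'" using R(3) by blast
      have "\<forall>f\<in>S. solves C f e" using K e unfolding solution_def by blast
      hence "\<forall>f\<in>S. solves C f e'" using e' eg unfolding eq_equiv_def by blast
      hence "e' \<in> E" using e' unfolding E_def by blast
      hence "solves C a e'" using a by blast
      thus "solves C a e" using e' eg unfolding eq_equiv_def by blast
    qed
  qed
qed

lemma case2:
  assumes V: "complete_wrt_varieties C U" and EQ: "has_equalizers C"
    and S: "S \<noteq> {}" "small U S" "\<forall>f\<in>S. ccod C f = A"
  shows "\<exists>E. generates_system C U S E A"
proof -
  obtain v where gv: "generates_variety C U S v" using V[unfolded complete_wrt_varieties_def, rule_format, of S A] S by blast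
  then obtain E0 A0 where E0: "is_system C U E0 A0" "general_solution C v E0"
    unfolding generates_variety_def variety_def by blast
  obtain f0 where f0: "f0 \<in> S" using S by blast
  have "ccod C v = A" using gv f0 S unfolding generates_variety_def factors_def by auto
  moreover obtain e0 where "e0 \<in> E0" using E0 unfolding is_system_def by blast
  ultimately have "A0 = A" using E0 unfolding is_system_def general_solution_def solution_def solves_def by auto
  hence sys: "is_system C U E0 A" using E0 by simp
  have parE: "\<And>e. e \<in> E0 \<Longrightarrow> parallel C (fst e) (snd e)" using sys unfolding is_system_def by auto
  have vsol: "\<And>e. e \<in> E0 \<Longrightarrow> solves C v e" using E0 unfolding general_solution_def solution_def by auto
  show ?thesis unfolding generates_system_def
  proof (intro exI conjI allI impI)
    show "is_system C U E0 A" by (rule sys)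
    show "\<forall>f\<in>S. solution C f E0"
    proof
      fix f assume f: "f \<in> S"
      then obtain h where h: "ccod C h = cdom C v" "f = cmp C v h"
        using gv unfolding generates_variety_def factors_def by blast
      show "solution C f E0" unfolding solution_def using h solves_cmp parE vsol by auto
    qed
  next
    fix K assume K: "is_system C U K A \<and> (\<forall>f\<in>S. solution C f K)"
    have vK: "solves C v k" if k: "k \<in> K" for k
    proof -
      obtain g1 g2 where kg: "k = (g1,g2)" by (cases k)
      have pg: "parallel C g1 g2" "cdom C g1 = A" using K k kg by (auto simp: is_system_def)
      then obtain e where e: "ccod C e = cdom C g1" "cmp C g1 e = cmp C g2 e"
        "\<forall>x. ccod C x = cdom C g1 \<and> cmp C g1 x = cmp C g2 x \<longrightarrow> (\<exists>!h. ccod C h = cdom C e \<and> x = cmp C e h)"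
        using EQ[unfolded has_equalizers_def, rule_format, of g1 g2] by blast
      have se: "solves C e k" using e kg by (simp add: solves_def)
      have "general_solution C e {(g1,g2)}" using e unfolding general_solution_def solution_def solves_def
        by auto
      moreover have "is_system C U {(g1,g2)} A" using pg by (auto simp: is_system_def small_def)
      ultimately have ve: "variety C U e" unfolding variety_def by blast
      have "\<forall>f\<in>S. factors C f e"
      proof
        fix f assume f: "f \<in> S"
        hence "solves C f k" using K k by (auto simp: solution_def)
        hence "ccod C f = cdom C g1 \<and> cmp C g1 f = cmp C g2 f" using kg by (simp add: solves_def)
        then obtain hh where "ccod C hh = cdom C e" "f = cmp C e hh" using e(3) by blast
        thus "factors C f e" using e(1) \<open>ccod C f = cdom C g1 \<and> cmp C g1 f = cmp C g2 f\<close> unfolding factors_def by auto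
      qed
      hence "factors C v e" using gv ve unfolding generates_variety_def by blast
      then obtain h where h: "ccod C h = cdom C e" "v = cmp C e h" unfolding factors_def by auto
      show ?thesis using solves_cmp[OF se _ h(1)] h pg kg by simp
    qed
    show "sys_implies C E0 K" unfolding sys_implies_def
    proof (intro allI impI)
      fix a assume "solution C a E0"
      then obtain h where h: "ccod C h = cdom C v" "a = cmp C v h"
        using E0 unfolding general_solution_def by blast
      have parK: "\<And>e. e \<in> K \<Longrightarrow> parallel C (fst e) (snd e)" using K unfolding is_system_def by auto
      show "solution C a K" unfolding solution_def using solves_cmp vK h parK by auto
    qed
  qed
qed

lemma case3:
  fixes U :: "'u itself"
  assumes CP: "has_coproducts C U" and CK: "has_cokernel_pairs C"
    and S: "small U S" "\<forall>f\<in>S. ccod C f = A"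
  shows "\<exists>E. generates_system C U S E A"
proof -
  obtain hS :: "'m \<Rightarrow> 'u" where hS: "inj_on hS S" using S(1) unfolding small_def by blast
  define I where "I = hS ` S"
  define fi where "fi i = inv_into S hS i" for i
  have fiI: "\<And>f. f \<in> S \<Longrightarrow> fi (hS f) = f" using hS unfolding fi_def by simp
  have fiS: "\<And>i. i \<in> I \<Longrightarrow> fi i \<in> S" unfolding fi_def I_def by (simp add: inv_into_into)
  obtain Q \<iota> where Q: "\<forall>i \<in> I. cdom C (\<iota> i) = cdom C (fi i) \<and> ccod C (\<iota> i) = Q"
     "\<forall>B g. (\<forall>i \<in> I. cdom C (g i) = cdom C (fi i) \<and> ccod C (g i) = B) \<longrightarrow>
           (\<exists>!t. cdom C t = Q \<and> ccod C t = B \<and> (\<forall>i \<in> I. cmp C t (\<iota> i) = g i))"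
    using CP[unfolded has_coproducts_def, rule_format, of I "\<lambda>i. cdom C (fi i)"] by blast
  have "\<exists>t. cdom C t = Q \<and> ccod C t = A \<and> (\<forall>i \<in> I. cmp C t (\<iota> i) = fi i)"
  proof -
    have "\<forall>i \<in> I. cdom C (fi i) = cdom C (fi i) \<and> ccod C (fi i) = A" using fiS S by auto
    thus ?thesis using Q(2)[rule_format, where B=A and g=fi] by blast
  qed
  then obtain t where t: "cdom C t = Q" "ccod C t = A" "\<forall>i \<in> I. cmp C t (\<iota> i) = fi i" by blast
  obtain p q where pq: "parallel C p q" "cdom C p = ccod C t" "cmp C p t = cmp C q t"
     "\<forall>g h. parallel C g h \<and> cdom C g = ccod C t \<and> cmp C g t = cmp C h t \<longrightarrow>
           (\<exists>!u. cdom C u = ccod C p \<and> cmp C u p = g \<and> cmp C u q = h)"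
    using CK[unfolded has_cokernel_pairs_def, rule_format, of t] by blast
  have ft: "\<And>f. f \<in> S \<Longrightarrow> f = cmp C t (\<iota> (hS f)) \<and> cdom C t = ccod C (\<iota> (hS f))"
    using t fiI Q(1) unfolding I_def by auto
  have "generates_system C U S {(p, q)} A"
  proof (rule gen_pair)
    show "\<forall>f\<in>S. ccod C f = A" by (rule S(2))
    show "parallel C p q" by (rule pq(1))
    show "cdom C p = A" using pq t by simp
    show "\<forall>f\<in>S. cmp C p f = cmp C q f"
    proof
      fix f assume f: "f \<in> S"
      have "cmp C p f = cmp C (cmp C p t) (\<iota> (hS f))" using ft[OF f] pq assoc[of p t "\<iota> (hS f)"] by simp
      also have "\<dots> = cmp C (cmp C q t) (\<iota> (hS f))" using pq by simp
      also have "\<dots> = cmp C q f" using ft[OF f] pq assoc[of q t "\<iota> (hS f)"] unfolding parallel_def by simp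
      finally show "cmp C p f = cmp C q f" .
    qed
  next
    fix g h assume gh: "parallel C g h" "cdom C g = A" "\<forall>f\<in>S. cmp C g f = cmp C h f"
    define G where "G i = cmp C g (fi i)" for i
    have G: "\<forall>i \<in> I. cdom C (G i) = cdom C (fi i) \<and> ccod C (G i) = ccod C g"
      unfolding G_def
    proof
      fix i assume "i \<in> I"
      hence "ccod C (fi i) = cdom C g" using fiS S(2) gh(2) by auto
      thus "cdom C (cmp C g (fi i)) = cdom C (fi i) \<and> ccod C (cmp C g (fi i)) = ccod C g"
        using cdom_cmp ccod_cmp by simp
    qed
    have c1: "cdom C (cmp C g t) = Q \<and> ccod C (cmp C g t) = ccod C g \<and> (\<forall>i \<in> I. cmp C (cmp C g t) (\<iota> i) = G i)"
      using t gh Q(1) unfolding G_def by (simp add: cdom_cmp ccod_cmp assoc)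
    have c2: "cdom C (cmp C h t) = Q \<and> ccod C (cmp C h t) = ccod C g \<and> (\<forall>i \<in> I. cmp C (cmp C h t) (\<iota> i) = G i)"
      using t gh Q(1) fiS unfolding G_def parallel_def by (simp add: cdom_cmp ccod_cmp assoc)
    have "cmp C g t = cmp C h t" using Q(2)[rule_format, where B="ccod C g" and g=G, OF G[rule_format]] c1 c2 by blast
    hence "\<exists>!u. cdom C u = ccod C p \<and> cmp C u p = g \<and> cmp C u q = h"
      using pq(4)[rule_format, of g h] gh(1,2) t(2) by simp
    thus "\<exists>u. cdom C u = ccod C p \<and> cmp C u p = g \<and> cmp C u q = h" by blast
  qed
  thus ?thesis by blast
qed

lemma case4:
  fixes U :: "'u itself"
  assumes CK: "has_cokernel_pairs C" and SC: "has_special_colimits C U"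
    and inf: "infinite (UNIV :: 'u set)"
    and S: "S \<noteq> {}" "small U S" "\<forall>f\<in>S. ccod C f = A"
  shows "\<exists>E. generates_system C U S E A"
proof -
  obtain hS :: "'m \<Rightarrow> 'u" where hS: "inj_on hS S" using S(2) unfolding small_def by blast
  obtain k :: "'u \<Rightarrow> 'u" and m1 m2 where k: "inj k" "m1 \<noteq> m2" "m1 \<notin> range k" "m2 \<notin> range k"
    using two_fresh[OF inf] by auto
  define idx where "idx = k \<circ> hS"
  have iidx: "inj_on idx S" unfolding idx_def using hS k(1) by (simp add: comp_inj_on inj_on_subset)
  define J where "J = idx ` S"
  define fJ where "fJ j = inv_into S idx j" for j
  have fJi: "\<And>f. f \<in> S \<Longrightarrow> fJ (idx f) = f" using iidx unfolding fJ_def by simp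
  have fJS: "\<And>j. j \<in> J \<Longrightarrow> fJ j \<in> S" unfolding fJ_def J_def by (simp add: inv_into_into)
  have mJ: "m1 \<notin> J" "m2 \<notin> J" using k unfolding J_def idx_def by auto
  define R where "R f p q = (parallel C p q \<and> cdom C p = ccod C f \<and> cmp C p f = cmp C q f \<and>
        (\<forall>g h. parallel C g h \<and> cdom C g = ccod C f \<and> cmp C g f = cmp C h f \<longrightarrow>
           (\<exists>!t. cdom C t = ccod C p \<and> cmp C t p = g \<and> cmp C t q = h)))" for f p q
  have "\<forall>f. \<exists>p q. R f p q"
    using CK unfolding has_cokernel_pairs_def R_def by (intro allI) blast
  hence "\<forall>f. \<exists>pq. R f (fst pq) (snd pq)" by auto
  hence "\<exists>F. \<forall>f. R f (fst (F f)) (snd (F f))" by (rule choice)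
  then obtain F where F: "\<forall>f. R f (fst (F f)) (snd (F f))" by blast
  define pp where "pp f = fst (F f)" for f
  define qq where "qq f = snd (F f)" for f
  have pq: "\<And>f. parallel C (pp f) (qq f) \<and> cdom C (pp f) = ccod C f \<and> cmp C (pp f) f = cmp C (qq f) f \<and>
        (\<forall>g h. parallel C g h \<and> cdom C g = ccod C f \<and> cmp C g f = cmp C h f \<longrightarrow>
           (\<exists>!t. cdom C t = ccod C (pp f) \<and> cmp C t (pp f) = g \<and> cmp C t (qq f) = h))"
    using F unfolding R_def pp_def qq_def by blast
  define M where "M = {m1, m2}"
  define P where "P = M \<union> J"
  define le where "le x y = (x = y \<or> (x \<in> M \<and> y \<notin> M))" for x y
  define D where "D x = (if x \<in> M then A else ccod C (pp (fJ x)))" for x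
  define Dm where "Dm x y = (if x = y then cid C (D x) else if x = m1 then pp (fJ y) else qq (fJ y))" for x y
  have JM: "\<And>j. j \<in> J \<Longrightarrow> j \<notin> M" using mJ unfolding M_def by auto
  have Dm1: "\<And>x y. x \<in> P \<Longrightarrow> y \<in> P \<Longrightarrow> le x y \<Longrightarrow> cdom C (Dm x y) = D x \<and> ccod C (Dm x y) = D y"
  proof -
    fix x y assume xy: "x \<in> P" "y \<in> P" "le x y"
    show "cdom C (Dm x y) = D x \<and> ccod C (Dm x y) = D y"
    proof (cases "x = y")
      case True thus ?thesis by (simp add: Dm_def)
    next
      case False
      hence xM: "x \<in> M" and yJ: "y \<in> J" and yM: "y \<notin> M" using xy unfolding le_def P_def by auto
      have "fJ y \<in> S" using fJS yJ by blast
      hence "cdom C (pp (fJ y)) = A" "cdom C (qq (fJ y)) = A" "ccod C (qq (fJ y)) = ccod C (pp (fJ y))"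
        using pq[of "fJ y"] S by (auto simp: parallel_def)
      thus ?thesis using False xM yM unfolding Dm_def D_def by auto
    qed
  qed
  have diag: "is_diagram C P le D Dm" unfolding is_diagram_def
  proof (intro conjI ballI impI)
    fix x y assume "x \<in> P" "y \<in> P" "le x y"
    thus "cdom C (Dm x y) = D x" "ccod C (Dm x y) = D y" using Dm1 by auto
  next
    fix x assume "x \<in> P" thus "Dm x x = cid C (D x)" by (simp add: Dm_def)
  next
    fix x y z assume xyz: "x \<in> P" "y \<in> P" "z \<in> P" "le x y \<and> le y z"
    show "cmp C (Dm y z) (Dm x y) = Dm x z"
    proof (cases "x = y")
      case True thus ?thesis using Dm1[of y z] xyz by (simp add: Dm_def id_r)
    next
      case False
      hence "y \<notin> M" using xyz unfolding le_def by auto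
      hence "y = z" using xyz unfolding le_def by auto
      thus ?thesis using Dm1[of x y] xyz by (simp add: Dm_def id_l)
    qed
  qed
  have minm: "{x. minimal_in P le x} = {m1, m2}"
  proof (rule set_eqI, rule iffI)
    fix x assume "x \<in> {x. minimal_in P le x}"
    hence x: "x \<in> P" "\<forall>y\<in>P. le y x \<longrightarrow> y = x" unfolding minimal_in_def by auto
    show "x \<in> {m1, m2}"
    proof (rule ccontr)
      assume "x \<notin> {m1, m2}"
      hence "le m1 x" "m1 \<noteq> x" unfolding le_def M_def by auto
      moreover have "m1 \<in> P" unfolding P_def M_def by auto
      ultimately show False using x by auto
    qed
  next
    fix x assume "x \<in> {m1, m2}"
    thus "x \<in> {x. minimal_in P le x}" unfolding minimal_in_def P_def le_def M_def by auto
  qed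
  have shape: "special_shape P le" unfolding special_shape_def
  proof (intro conjI exI)
    show "is_poset P le" unfolding is_poset_def le_def by auto
    show "m1 \<noteq> m2" by (rule k(2))
    show "{x. minimal_in P le x} = {m1, m2}" by (rule minm)
    show "\<forall>x\<in>P - {m1, m2}. maximal_in P le x \<and> le m1 x \<and> le m2 x"
      unfolding maximal_in_def le_def M_def by auto
  qed
  obtain L lg where col: "is_cocone C P le D Dm L lg"
     "\<forall>B \<mu>. is_cocone C P le D Dm B \<mu> \<longrightarrow>
           (\<exists>!t. cdom C t = L \<and> ccod C t = B \<and> (\<forall>x \<in> P. cmp C t (lg x) = \<mu> x))"
  proof -
    have sd: "special_shape P le \<and> is_diagram C P le D Dm" using shape diag by (rule conjI)
    have "has_colimit C P le D Dm"
      using SC[unfolded has_special_colimits_def, THEN spec[of _ P], THEN spec[of _ le], THEN spec[of _ D], THEN spec[of _ Dm]] sd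
      by (rule mp)
    then obtain L lg where "is_cocone C P le D Dm L lg"
     "\<forall>B \<mu>. is_cocone C P le D Dm B \<mu> \<longrightarrow>
           (\<exists>!t. cdom C t = L \<and> ccod C t = B \<and> (\<forall>x \<in> P. cmp C t (lg x) = \<mu> x))"
      unfolding has_colimit_def by (elim exE conjE)
    thus ?thesis by (rule that)
  qed
  have m12P: "m1 \<in> P" "m2 \<in> P" "m1 \<in> M" "m2 \<in> M" unfolding P_def M_def by auto
  have lgm: "cdom C (lg m1) = A" "cdom C (lg m2) = A" "ccod C (lg m1) = L" "ccod C (lg m2) = L"
    using col(1) m12P unfolding is_cocone_def D_def by auto
  have lgj: "\<And>f. f \<in> S \<Longrightarrow> idx f \<in> P \<and> idx f \<notin> M \<and> cmp C (lg (idx f)) (pp f) = lg m1 \<and> cmp C (lg (idx f)) (qq f) = lg m2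
      \<and> cdom C (lg (idx f)) = ccod C (pp f)"
  proof -
    fix f assume f: "f \<in> S"
    have j: "idx f \<in> J" "idx f \<in> P" using f unfolding J_def P_def by auto
    hence jm: "idx f \<notin> M" "idx f \<noteq> m1" "idx f \<noteq> m2" using JM unfolding M_def by auto
    have "le m1 (idx f)" "le m2 (idx f)" using jm m12P unfolding le_def by auto
    hence "cmp C (lg (idx f)) (Dm m1 (idx f)) = lg m1" "cmp C (lg (idx f)) (Dm m2 (idx f)) = lg m2"
      using col(1) j m12P unfolding is_cocone_def by auto
    moreover have "Dm m1 (idx f) = pp f" "Dm m2 (idx f) = qq f" using jm k(2) fJi[OF f] unfolding Dm_def by auto
    moreover have "cdom C (lg (idx f)) = ccod C (pp f)" using col(1) j jm fJi[OF f] unfolding is_cocone_def D_def by auto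
    ultimately show "?thesis f" using j jm by auto
  qed
  have "generates_system C U S {(lg m1, lg m2)} A"
  proof (rule gen_pair)
    show "\<forall>f\<in>S. ccod C f = A" by (rule S(3))
    show "parallel C (lg m1) (lg m2)" using lgm by (simp add: parallel_def)
    show "cdom C (lg m1) = A" by (rule lgm(1))
    show "\<forall>f\<in>S. cmp C (lg m1) f = cmp C (lg m2) f"
    proof
      fix f assume f: "f \<in> S"
      have pf: "parallel C (pp f) (qq f)" "cdom C (pp f) = ccod C f" "cmp C (pp f) f = cmp C (qq f) f"
        using pq[of f] by auto
      have "cmp C (lg m1) f = cmp C (lg (idx f)) (cmp C (pp f) f)" using lgj[OF f] pf
        using assoc[of "lg (idx f)" "pp f" f] by simp
      also have "\<dots> = cmp C (lg (idx f)) (cmp C (qq f) f)" using pf by simp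
      also have "\<dots> = cmp C (lg m2) f" using lgj[OF f] pf assoc[of "lg (idx f)" "qq f" f] unfolding parallel_def by simp
      finally show "cmp C (lg m1) f = cmp C (lg m2) f" .
    qed
  next
    fix g h assume gh: "parallel C g h" "cdom C g = A" "\<forall>f\<in>S. cmp C g f = cmp C h f"
    define Ru where "Ru f u = (cdom C u = ccod C (pp f) \<and> cmp C u (pp f) = g \<and> cmp C u (qq f) = h)" for f u
    have ex: "\<exists>u. Ru f u" if f: "f \<in> S" for f
    proof -
      have "parallel C g h \<and> cdom C g = ccod C f \<and> cmp C g f = cmp C h f" using gh f S(3) by auto
      hence "\<exists>!t. cdom C t = ccod C (pp f) \<and> cmp C t (pp f) = g \<and> cmp C t (qq f) = h" using pq[of f] by (auto dest: spec[of _ g] spec[of _ h])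
      thus ?thesis unfolding Ru_def by blast
    qed
    define u where "u f = (SOME u. Ru f u)" for f
    have u: "\<And>f. f \<in> S \<Longrightarrow> cdom C (u f) = ccod C (pp f) \<and> cmp C (u f) (pp f) = g \<and> cmp C (u f) (qq f) = h"
    proof -
      fix f assume "f \<in> S"
      hence "Ru f (u f)" unfolding u_def by (rule someI_ex[OF ex])
      thus "?thesis f" unfolding Ru_def by blast
    qed
    define \<mu> where "\<mu> x = (if x = m1 then g else if x = m2 then h else u (fJ x))" for x
    have cc: "is_cocone C P le D Dm (ccod C g) \<mu>" unfolding is_cocone_def
    proof (intro conjI ballI impI)
      fix x assume x: "x \<in> P"
      have "cdom C (\<mu> x) = D x \<and> ccod C (\<mu> x) = ccod C g"
      proof (cases "x \<in> M")
        case True thus ?thesis using gh unfolding \<mu>_def D_def M_def parallel_def by auto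
      next
        case False
        hence xJ: "x \<in> J" "x \<noteq> m1" "x \<noteq> m2" using x unfolding P_def M_def by auto
        have uf: "cdom C (u (fJ x)) = ccod C (pp (fJ x))" "cmp C (u (fJ x)) (pp (fJ x)) = g"
          using u fJS xJ by auto
        have "ccod C (u (fJ x)) = ccod C g" using uf ccod_cmp[of "u (fJ x)" "pp (fJ x)"] by simp
        thus ?thesis using uf False xJ unfolding \<mu>_def D_def by auto
      qed
      thus "cdom C (\<mu> x) = D x" "ccod C (\<mu> x) = ccod C g" by auto
    next
      fix x y assume xy: "x \<in> P" "y \<in> P" "le x y"
      show "cmp C (\<mu> y) (Dm x y) = \<mu> x"
      proof (cases "x = y")
        case True
        have "cdom C (\<mu> x) = D x"
        proof (cases "x \<in> M")
          case True thus ?thesis using gh unfolding \<mu>_def D_def M_def parallel_def by auto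
        next
          case False
          hence xJ: "x \<in> J" "x \<noteq> m1" "x \<noteq> m2" using xy unfolding P_def M_def by auto
          thus ?thesis using u fJS False unfolding \<mu>_def D_def by auto
        qed
        thus ?thesis using True by (simp add: Dm_def id_r)
      next
        case False
        hence xM: "x \<in> M" and yM: "y \<notin> M" using xy unfolding le_def by auto
        hence yJ: "y \<in> J" "y \<noteq> m1" "y \<noteq> m2" using xy unfolding P_def M_def by auto
        show ?thesis using u[OF fJS[OF yJ(1)]] xM yJ False k(2) unfolding \<mu>_def Dm_def M_def by auto
      qed
    qed
    then obtain t where t: "cdom C t = L" "\<forall>x \<in> P. cmp C t (lg x) = \<mu> x" using col(2)[rule_format, OF cc] by blast
    show "\<exists>t. cdom C t = ccod C (lg m1) \<and> cmp C t (lg m1) = g \<and> cmp C t (lg m2) = h"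
      using t lgm m12P k(2) unfolding \<mu>_def by auto
  qed
  thus ?thesis by blast
qed

end

theorem mainTheorem7:
  fixes C :: "('o, 'm) cat" and U :: "'u itself"
  assumes "category C"
    and "infinite (UNIV :: 'u set)"
    and "equations_small C U
         \<or> (complete_wrt_varieties C U \<and> has_equalizers C)
         \<or> (has_coproducts C U \<and> has_cokernel_pairs C)
         \<or> (has_cokernel_pairs C \<and> has_special_colimits C U)"
  shows "complete_wrt_systems C U"
  unfolding complete_wrt_systems_def
proof (intro allI impI)
  fix S A assume S: "S \<noteq> {} \<and> small U S \<and> (\<forall>f\<in>S. ccod C f = A)"
  show "\<exists>E. generates_system C U S E A"
  proof -
    have S1: "S \<noteq> {}" "small U S" "\<forall>f\<in>S. ccod C f = A" using S by auto
    consider "equations_small C U" | "complete_wrt_varieties C U" "has_equalizers C"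
      | "has_coproducts C U" "has_cokernel_pairs C" | "has_cokernel_pairs C" "has_special_colimits C U"
      using assms(3) by blast
    thus ?thesis
    proof cases
      case 1 show ?thesis using case1[OF assms(1) 1 S1(3)] .
    next
      case 2 show ?thesis using case2[OF assms(1) 2 S1] .
    next
      case 3 show ?thesis using case3[OF assms(1) 3 S1(2,3)] .
    next
      case 4 show ?thesis using case4[OF assms(1) 4 assms(2) S1] .
    qed
  qed
qed

end
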